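(* Let $\Omega\in\mathbb{C}^{N\times N}$ be skew-Hermitian and let $A\neq 0$ be an eigenvector of $\mathrm{ad}_\Omega$ to the non-zero eigenvalue $i\varphi$, $\varphi\in\mathbb{R}\setminus\{0\}$. Then: (a) $A^\dagger$ is an eigenvector of $\mathrm{ad}_\Omega$ to the eigenvalue $-i\varphi$; (b) $A$ is nilpotent; (c) $[A,A^\dagger]\neq 0$ and $[\Omega,[A,A^\dagger]]=0$.
   Context: $\mathrm{ad}_\Omega(X)=[\Omega,X]=\Omega X-X\Omega$. *)

theory Defs
  imports "Jordan_Normal_Form.Schur_Decomposition"
begin

definition ad :: "complex mat \<Rightarrow> complex mat \<Rightarrow> complex mat" where
  "ad \<Omega> X = \<Omega> * X - X * \<Omega>"

definition skew_hermitian :: "complex mat \<Rightarrow> bool" where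
  "skew_hermitian \<Omega> \<longleftrightarrow> mat_adjoint \<Omega> = - \<Omega>"

definition nilpotent_mat :: "complex mat \<Rightarrow> bool" where
  "nilpotent_mat A \<longleftrightarrow> (\<exists>k. A ^\<^sub>m k = 0\<^sub>m (dim_row A) (dim_col A))"

end

theory Submission
  imports Defs
begin

lemma adj_carrier: "A \<in> carrier_mat n m \<Longrightarrow> mat_adjoint A \<in> carrier_mat m n"
  unfolding mat_adjoint_def by auto

lemma adj_index: fixes A :: "complex mat" shows "A \<in> carrier_mat n m \<Longrightarrow> i < m \<Longrightarrow> j < n \<Longrightarrow> mat_adjoint A $$ (i,j) = cnj (A $$ (j,i))"
  unfolding mat_adjoint_def by (auto simp: mat_of_rows_def)

lemma adj_adj: fixes A :: "complex mat" assumes "A \<in> carrier_mat n m" shows "mat_adjoint (mat_adjoint A) = A"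
proof -
  have c: "mat_adjoint A \<in> carrier_mat m n" using assms by (rule adj_carrier)
  show ?thesis
    by (rule eq_matI, insert assms c adj_carrier[OF c], auto simp: adj_index[OF c] adj_index[OF assms])
qed

lemma adj_mult: fixes A B :: "complex mat" assumes A: "A \<in> carrier_mat n m" and B: "B \<in> carrier_mat m k"
  shows "mat_adjoint (A * B) = mat_adjoint B * mat_adjoint A"
proof -
  have AB: "A * B \<in> carrier_mat n k" using A B by auto
  have cA: "mat_adjoint A \<in> carrier_mat m n" using A by (rule adj_carrier)
  have cB: "mat_adjoint B \<in> carrier_mat k m" using B by (rule adj_carrier)
  show ?thesis
  proof (rule eq_matI)
    fix i j assume i: "i < dim_row (mat_adjoint B * mat_adjoint A)" and j: "j < dim_col (mat_adjoint B * mat_adjoint A)"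
    hence i: "i < k" and j: "j < n" using cA cB by auto
    have "mat_adjoint (A * B) $$ (i, j) = cnj ((A * B) $$ (j, i))" using adj_index[OF AB i j] .
    also have "\<dots> = (\<Sum>l<m. cnj (A $$ (j,l)) * cnj (B $$ (l,i)))"
      using A B i j by (auto simp: scalar_prod_def atLeast0LessThan)
    also have "\<dots> = (mat_adjoint B * mat_adjoint A) $$ (i, j)"
      using A B i j cA cB by (auto simp: scalar_prod_def atLeast0LessThan adj_index[OF A] adj_index[OF B] intro!: sum.cong)
    finally show "mat_adjoint (A * B) $$ (i, j) = (mat_adjoint B * mat_adjoint A) $$ (i, j)" .
  qed (insert AB cA cB adj_carrier[OF AB], auto)
qed

lemma mult_adj_zero: fixes X :: "complex mat" assumes X: "X \<in> carrier_mat n m" and z: "X * mat_adjoint X = 0\<^sub>m n n"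
  shows "X = 0\<^sub>m n m"
proof (rule eq_matI)
  fix i j assume "i < dim_row (0\<^sub>m n m :: complex mat)" "j < dim_col (0\<^sub>m n m :: complex mat)"
  hence i: "i < n" and j: "j < m" by auto
  have cX: "mat_adjoint X \<in> carrier_mat m n" using X by (rule adj_carrier)
  have "(X * mat_adjoint X) $$ (i,i) = (\<Sum>l<m. X $$ (i,l) * cnj (X $$ (i,l)))"
    using X cX i by (auto simp: scalar_prod_def atLeast0LessThan adj_index[OF X] intro!: sum.cong)
  also have "\<dots> = complex_of_real (\<Sum>l<m. (cmod (X $$ (i,l)))\<^sup>2)"
    by (simp only: of_real_sum complex_norm_square)
  finally have e: "(X * mat_adjoint X) $$ (i,i) = complex_of_real (\<Sum>l<m. (cmod (X $$ (i,l)))\<^sup>2)" .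
  have "(X * mat_adjoint X) $$ (i,i) = 0" using z i by simp
  hence "(\<Sum>l<m. (cmod (X $$ (i,l)))\<^sup>2) = 0" using e by (metis of_real_eq_0_iff)
  hence "\<forall>l\<in>{..<m}. (cmod (X $$ (i,l)))\<^sup>2 = 0"
    by (subst sum_nonneg_eq_0_iff[symmetric]) auto
  thus "X $$ (i, j) = 0\<^sub>m n m $$ (i, j)" using i j by auto
qed (insert X, auto)

lemma shift_eq: fixes X Y Z :: "complex mat"
  assumes "X \<in> carrier_mat n m" "Y \<in> carrier_mat n m" "Z \<in> carrier_mat n m"
  shows "(X - Y = Z) \<longleftrightarrow> (X = Y + Z)"
proof
  assume "X - Y = Z" thus "X = Y + Z"
    by (intro eq_matI, insert assms, auto)
next
  assume "X = Y + Z" thus "X - Y = Z"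
    by (intro eq_matI, insert assms, auto)
qed

lemma comm_prod: fixes W X Y :: "complex mat"
  assumes W: "W \<in> carrier_mat n n" and X: "X \<in> carrier_mat n n" and Y: "Y \<in> carrier_mat n n"
    and hX: "W * X = X * W + a \<cdot>\<^sub>m X" and hY: "W * Y = Y * W + b \<cdot>\<^sub>m Y"
  shows "W * (X * Y) = (X * Y) * W + (a + b) \<cdot>\<^sub>m (X * Y)"
proof -
  have "W * (X * Y) = (W * X) * Y" using W X Y by simp
  also have "\<dots> = (X * W) * Y + (a \<cdot>\<^sub>m X) * Y" unfolding hX
    using W X Y by (simp add: add_mult_distrib_mat[of _ n n])
  also have "\<dots> = X * (W * Y) + a \<cdot>\<^sub>m (X * Y)" using W X Y
    by (simp add: mult_smult_assoc_mat[of _ n n])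
  also have "\<dots> = X * (Y * W) + X * (b \<cdot>\<^sub>m Y) + a \<cdot>\<^sub>m (X * Y)" unfolding hY
    using W X Y by (subst mult_add_distrib_mat[of X n n]) auto
  also have "\<dots> = (X * Y) * W + (a + b) \<cdot>\<^sub>m (X * Y)"
    using W X Y by (intro eq_matI) (auto simp: mult_smult_distrib[of _ n n] algebra_simps)
  finally show ?thesis .
qed


lemma ad_adj: fixes W X :: "complex mat"
  assumes W: "W \<in> carrier_mat n n" and X: "X \<in> carrier_mat n n" and sk: "skew_hermitian W"
  shows "ad W (mat_adjoint X) = mat_adjoint (ad W X)"
proof -
  have cX: "mat_adjoint X \<in> carrier_mat n n" using X by (rule adj_carrier)
  have cD: "ad W X \<in> carrier_mat n n" using W X unfolding ad_def by auto
  have s: "cnj (W $$ (i,j)) = - W $$ (j,i)" if "i < n" "j < n" for i j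
  proof -
    have "mat_adjoint W $$ (j,i) = (- W) $$ (j,i)" using sk unfolding skew_hermitian_def by simp
    thus ?thesis using that W by (simp add: adj_index[OF W])
  qed
  show ?thesis
  proof (rule eq_matI)
    fix i j assume "i < dim_row (mat_adjoint (ad W X))" "j < dim_col (mat_adjoint (ad W X))"
    hence i: "i < n" and j: "j < n" using adj_carrier[OF cD] by auto
    have "mat_adjoint (ad W X) $$ (i,j) = cnj ((W * X) $$ (j,i) - (X * W) $$ (j,i))"
      using adj_index[OF cD i j] W X i j by (simp add: ad_def)
    also have "\<dots> = (\<Sum>l<n. cnj (W $$ (j,l)) * cnj (X $$ (l,i))) - (\<Sum>l<n. cnj (X $$ (j,l)) * cnj (W $$ (l,i)))"
      using W X i j by (simp add: scalar_prod_def atLeast0LessThan)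
    also have "\<dots> = (\<Sum>l<n. - W $$ (l,j) * cnj (X $$ (l,i))) - (\<Sum>l<n. - cnj (X $$ (j,l)) * W $$ (i,l))"
      using i j by (intro arg_cong2[where f="(-)"] sum.cong) (auto simp: s)
    also have "\<dots> = (\<Sum>l<n. W $$ (i,l) * cnj (X $$ (j,l))) - (\<Sum>l<n. cnj (X $$ (l,i)) * W $$ (l,j))"
      by (simp add: sum_negf algebra_simps)
    also have "\<dots> = ad W (mat_adjoint X) $$ (i,j)"
      using W X cX i j by (simp add: ad_def scalar_prod_def atLeast0LessThan adj_index[OF X])
    finally show "ad W (mat_adjoint X) $$ (i, j) = mat_adjoint (ad W X) $$ (i, j)" by simp
  qed (insert W cX adj_carrier[OF cD], auto simp: ad_def)
qed

lemma adj_smult: fixes X :: "complex mat" assumes X: "X \<in> carrier_mat n m"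
  shows "mat_adjoint (c \<cdot>\<^sub>m X) = cnj c \<cdot>\<^sub>m mat_adjoint X"
  using X adj_carrier[OF X] adj_carrier[of "c \<cdot>\<^sub>m X" n m]
  by (intro eq_matI) (auto simp: adj_index[OF X] adj_index[of "c \<cdot>\<^sub>m X" n m])

lemma pow_comm: fixes W A :: "complex mat"
  assumes W: "W \<in> carrier_mat n n" and A: "A \<in> carrier_mat n n"
    and h: "W * A = A * W + c \<cdot>\<^sub>m A"
  shows "W * (A ^\<^sub>m k) = (A ^\<^sub>m k) * W + (of_nat k * c) \<cdot>\<^sub>m (A ^\<^sub>m k)"
proof (induction k)
  case 0
  then show ?case using W A by (intro eq_matI) auto
next
  case (Suc k)
  have "W * (A ^\<^sub>m Suc k) = W * (A ^\<^sub>m k * A)" by simp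
  also have "\<dots> = (A ^\<^sub>m k * A) * W + (of_nat k * c + c) \<cdot>\<^sub>m (A ^\<^sub>m k * A)"
    by (rule comm_prod[OF W _ A Suc h]) (use A in auto)
  finally show ?case by (simp add: algebra_simps)
qed

lemma ev_zero: fixes W X :: "complex mat"
  assumes W: "W \<in> carrier_mat n n" and X: "X \<in> carrier_mat n n"
    and h: "W * X = X * W + d \<cdot>\<^sub>m X"
    and big: "cmod d > 2 * (\<Sum>i<n. \<Sum>j<n. cmod (W $$ (i,j)))"
  shows "X = 0\<^sub>m n n"
proof (cases "n = 0")
  case True thus ?thesis using X by (intro eq_matI) auto
next
  case False
  define S where "S = (\<Sum>i<n. \<Sum>j<n. cmod (W $$ (i,j)))"
  define T where "T = (\<lambda>(j,k). cmod (X $$ (j,k))) ` ({..<n} \<times> {..<n})"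
  define M where "M = Max T"
  have fin: "finite T" "T \<noteq> {}" using False unfolding T_def by auto
  have le: "cmod (X $$ (j,k)) \<le> M" if "j < n" "k < n" for j k
    unfolding M_def using fin that by (intro Max_ge) (auto simp: T_def)
  have "M \<in> T" unfolding M_def using fin by (rule Max_in)
  then obtain j0 k0 where j0: "j0 < n" and k0: "k0 < n" and Mj: "M = cmod (X $$ (j0,k0))"
    unfolding T_def by auto
  have M0: "M \<ge> 0" using Mj by simp
  have row: "(\<Sum>l<n. cmod (W $$ (j,l))) \<le> S" if "j < n" for j
    unfolding S_def using that by (intro member_le_sum[where f="\<lambda>i. \<Sum>l<n. cmod (W $$ (i,l))"]) (auto intro: sum_nonneg)
  have col: "(\<Sum>l<n. cmod (W $$ (l,k))) \<le> S" if "k < n" for k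
    unfolding S_def using that by (intro sum_mono member_le_sum) auto
  have e: "(W * X) $$ (j0,k0) = (X * W) $$ (j0,k0) + d * X $$ (j0,k0)"
  proof -
    have "(W * X) $$ (j0,k0) = (X * W + d \<cdot>\<^sub>m X) $$ (j0,k0)" using h by simp
    also have "\<dots> = (X * W) $$ (j0,k0) + (d \<cdot>\<^sub>m X) $$ (j0,k0)"
      using W X j0 k0 by (intro index_add_mat(1)) auto
    also have "(d \<cdot>\<^sub>m X) $$ (j0,k0) = d * X $$ (j0,k0)" using X j0 k0 by auto
    finally show ?thesis .
  qed
  have b1: "cmod ((W * X) $$ (j0,k0)) \<le> S * M"
  proof -
    have "cmod ((W * X) $$ (j0,k0)) = cmod (\<Sum>l<n. W $$ (j0,l) * X $$ (l,k0))"
      using W X j0 k0 by (simp add: scalar_prod_def atLeast0LessThan)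
    also have "\<dots> \<le> (\<Sum>l<n. cmod (W $$ (j0,l)) * M)"
      by (rule order_trans[OF norm_sum sum_mono]) (auto simp: norm_mult k0 intro!: mult_left_mono le)
    also have "\<dots> \<le> S * M" using row[OF j0] M0 by (simp add: sum_distrib_right[symmetric] mult_right_mono)
    finally show ?thesis .
  qed
  have b2: "cmod ((X * W) $$ (j0,k0)) \<le> S * M"
  proof -
    have "cmod ((X * W) $$ (j0,k0)) = cmod (\<Sum>l<n. X $$ (j0,l) * W $$ (l,k0))"
      using W X j0 k0 by (simp add: scalar_prod_def atLeast0LessThan)
    also have "\<dots> \<le> (\<Sum>l<n. M * cmod (W $$ (l,k0)))"
      by (rule order_trans[OF norm_sum sum_mono]) (auto simp: norm_mult j0 intro!: mult_right_mono le)
    also have "\<dots> = (\<Sum>l<n. cmod (W $$ (l,k0)) * M)" by (simp add: mult.commute)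
    also have "\<dots> \<le> S * M" using col[OF k0] M0 by (simp add: sum_distrib_right[symmetric] mult_right_mono)
    finally show ?thesis .
  qed
  have "cmod d * M = cmod ((W * X) $$ (j0,k0) - (X * W) $$ (j0,k0))"
    using e Mj by (simp add: norm_mult)
  also have "\<dots> \<le> 2 * S * M" using norm_triangle_ineq4[of "(W * X) $$ (j0,k0)" "(X * W) $$ (j0,k0)"] b1 b2 by simp
  finally have "cmod d * M \<le> 2 * S * M" .
  hence "(cmod d - 2 * S) * M \<le> 0" by (simp add: algebra_simps)
  moreover have "cmod d - 2 * S > 0" using big unfolding S_def by simp
  ultimately have "M = 0" using M0 mult_pos_pos[of "cmod d - 2 * S" M] by linarith
  thus ?thesis using X le by (intro eq_matI) force+
qed


lemma normal_descent: fixes A P Q :: "complex mat"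
  assumes A: "A \<in> carrier_mat n n" and Q: "Q \<in> carrier_mat n n"
    and P: "P = Q * A" and PA: "P * A = 0\<^sub>m n n"
    and nrm: "A * mat_adjoint A = mat_adjoint A * A"
  shows "P = 0\<^sub>m n n"
proof -
  define B where "B = mat_adjoint A"
  have Bc: "B \<in> carrier_mat n n" unfolding B_def using A by (rule adj_carrier)
  have Pc: "P \<in> carrier_mat n n" using P A Q by auto
  have Pa: "mat_adjoint P \<in> carrier_mat n n" using Pc by (rule adj_carrier)
  have Qa: "mat_adjoint Q \<in> carrier_mat n n" using Q by (rule adj_carrier)
  define R where "R = P * B"
  have Rc: "R \<in> carrier_mat n n" unfolding R_def using Pc Bc by auto
  have "R * mat_adjoint R = P * B * (A * mat_adjoint P)"
    unfolding R_def using adj_mult[OF Pc Bc] adj_adj[OF A] B_def by simp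
  also have "\<dots> = P * (B * (A * mat_adjoint P))" by (rule assoc_mult_mat[OF Pc Bc]) (use A Pa in auto)
  also have "\<dots> = P * ((B * A) * mat_adjoint P)" by (subst assoc_mult_mat[OF Bc A Pa]) simp
  also have "\<dots> = P * (B * A) * mat_adjoint P" by (rule assoc_mult_mat[symmetric, OF Pc]) (use Bc A Pa in auto)
  also have "\<dots> = P * (A * B) * mat_adjoint P" using nrm B_def by simp
  also have "\<dots> = (P * A) * B * mat_adjoint P" by (subst assoc_mult_mat[OF Pc A Bc]) simp
  also have "\<dots> = 0\<^sub>m n n" using PA Bc Pa by simp
  finally have "R = 0\<^sub>m n n" using mult_adj_zero[OF Rc] by simp
  have "P * mat_adjoint P = P * (B * mat_adjoint Q)"
    using adj_mult[OF Q A] P B_def by simp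
  also have "\<dots> = R * mat_adjoint Q" unfolding R_def by (rule assoc_mult_mat[symmetric, OF Pc Bc Qa])
  also have "\<dots> = 0\<^sub>m n n" using \<open>R = 0\<^sub>m n n\<close> Qa by simp
  finally show ?thesis using mult_adj_zero[OF Pc] by simp
qed

lemma normal_nilpotent: fixes A :: "complex mat"
  assumes A: "A \<in> carrier_mat n n"
    and nrm: "A * mat_adjoint A = mat_adjoint A * A"
    and z: "A ^\<^sub>m Suc k = 0\<^sub>m n n"
  shows "A = 0\<^sub>m n n"
  using z
proof (induction k)
  case 0
  then show ?case using A by simp
next
  case (Suc k)
  have "A ^\<^sub>m Suc k = 0\<^sub>m n n"
  proof (rule normal_descent[OF A _ _ _ nrm])
    show "A ^\<^sub>m k \<in> carrier_mat n n" using A by simp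
    show "A ^\<^sub>m Suc k = A ^\<^sub>m k * A" by simp
    show "A ^\<^sub>m Suc k * A = 0\<^sub>m n n" using Suc.prems by simp
  qed
  then show ?case by (rule Suc.IH)
qed

theorem lemma2p24:
  fixes \<Omega> A :: "complex mat" and N :: nat and \<phi> :: real
  assumes "\<Omega> \<in> carrier_mat N N" and "A \<in> carrier_mat N N"
    and "skew_hermitian \<Omega>"
    and "A \<noteq> 0\<^sub>m N N"
    and "\<phi> \<noteq> 0"
    and "ad \<Omega> A = (\<i> * complex_of_real \<phi>) \<cdot>\<^sub>m A"
  shows "(mat_adjoint A \<noteq> 0\<^sub>m N N \<and> ad \<Omega> (mat_adjoint A) = (- \<i> * complex_of_real \<phi>) \<cdot>\<^sub>m mat_adjoint A)
    \<and> nilpotent_mat A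
    \<and> (ad A (mat_adjoint A) \<noteq> 0\<^sub>m N N
    \<and> ad \<Omega> (ad A (mat_adjoint A)) = 0\<^sub>m N N)"
proof -
  note W = assms(1) and A = assms(2)
  define c where "c = \<i> * complex_of_real \<phi>"
  define B where "B = mat_adjoint A"
  have Bc: "B \<in> carrier_mat N N" unfolding B_def using A by (rule adj_carrier)
  have hA: "\<Omega> * A = A * \<Omega> + c \<cdot>\<^sub>m A"
    using assms(6) W A unfolding ad_def c_def by (subst shift_eq[symmetric, of _ N N]) auto
  have a1: "B \<noteq> 0\<^sub>m N N"
  proof
    assume "B = 0\<^sub>m N N"
    hence "mat_adjoint B = 0\<^sub>m N N"
      by (intro eq_matI) (insert adj_carrier[of "0\<^sub>m N N" N N], auto simp: adj_index[of "0\<^sub>m N N" N N])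
    thus False using adj_adj[OF A] assms(4) B_def by simp
  qed
  have a2: "ad \<Omega> B = (- c) \<cdot>\<^sub>m B"
    unfolding B_def using ad_adj[OF W A assms(3)] assms(6) adj_smult[OF A] c_def by simp
  have hB: "\<Omega> * B = B * \<Omega> + (- c) \<cdot>\<^sub>m B"
    using a2 W Bc unfolding ad_def by (subst shift_eq[symmetric, of _ N N]) auto
  define S where "S = (\<Sum>i<N. \<Sum>j<N. cmod (\<Omega> $$ (i,j)))"
  obtain m where m: "2 * S / \<bar>\<phi>\<bar> < real m" using reals_Archimedean2 by blast
  have "2 * S < real m * \<bar>\<phi>\<bar>" using m assms(5) by (simp add: field_simps)
  hence big: "cmod (of_nat m * c) > 2 * S" unfolding c_def by (simp add: norm_mult)
  have Am: "A ^\<^sub>m m = 0\<^sub>m N N"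
    by (rule ev_zero[OF W _ pow_comm[OF W A hA]]) (use A big S_def in auto)
  have nil: "nilpotent_mat A" unfolding nilpotent_mat_def using Am A by auto
  have c1: "\<Omega> * (A * B) = (A * B) * \<Omega> + (c + - c) \<cdot>\<^sub>m (A * B)"
    by (rule comm_prod[OF W A Bc hA hB])
  have c2: "\<Omega> * (B * A) = (B * A) * \<Omega> + (- c + c) \<cdot>\<^sub>m (B * A)"
    by (rule comm_prod[OF W Bc A hB hA])
  have "\<Omega> * (A * B - B * A) = \<Omega> * (A * B) - \<Omega> * (B * A)"
    using W A Bc by (subst mult_minus_distrib_mat[of _ N N]) auto
  moreover have "(A * B - B * A) * \<Omega> = (A * B) * \<Omega> - (B * A) * \<Omega>"
    using W A Bc by (subst minus_mult_distrib_mat[of _ N N]) auto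
  ultimately have cc: "ad \<Omega> (ad A B) = 0\<^sub>m N N"
    unfolding ad_def c1 c2 using W A Bc by (intro eq_matI) auto
  have nz: "ad A B \<noteq> 0\<^sub>m N N"
  proof
    assume "ad A B = 0\<^sub>m N N"
    hence nrm: "A * mat_adjoint A = mat_adjoint A * A" unfolding ad_def B_def
      using A Bc B_def by (subst (asm) shift_eq[of _ N N]) auto
    show False
    proof (cases m)
      case 0
      hence "N = 0" using Am by (metis index_one_mat(1) index_zero_mat(1) pow_mat.simps(1) carrier_matD(1) A zero_neq_one gr0I)
      thus False using assms(4) A by auto
    next
      case (Suc k)
      thus False using normal_nilpotent[OF A nrm] Am assms(4) by simp
    qed
  qed
  show ?thesis using a1 a2 nil cc nz unfolding B_def c_def by simp
qed

end
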